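(* Let $n\ge1$. Every $n$-qubit unitary of the 11-stage form -H-C-P-C-P-C-H-P-C-P-C- (i.e. a composition, in this order of application, of an $\textsc{H}$-layer, $\textsc{C}$-layer, $\textsc{P}$-layer, $\textsc{C}$-layer, $\textsc{P}$-layer, $\textsc{C}$-layer, $\textsc{H}$-layer, $\textsc{P}$-layer, $\textsc{C}$-layer, $\textsc{P}$-layer, $\textsc{C}$-layer) can be written in the 8-stage form -H-C-CZ-P-H-P-CZ-C-, i.e. as a composition, in this order of application, of an $\textsc{H}$-layer, a $\textsc{C}$-layer, a $\textsc{CZ}$-layer, a $\textsc{P}$-layer, an $\textsc{H}$-layer, a $\textsc{P}$-layer, a $\textsc{CZ}$-layer and a $\textsc{C}$-layer.
   Context: Gates: $\textsc{H}=\frac{1}{\sqrt2}\begin{pmatrix}1&1\\1&-1\end{pmatrix}$, $\textsc{P}=\mathrm{diag}(1,i)$, $\textsc{CNOT}|a,b\rangle=|a,a\oplus b\rangle$, $\textsc{CZ}|a,b\rangle=(-1)^{ab}|a,b\rangle$. Layers on $n$ qubits: an $\textsc{H}$-layer is $\bigotimes_{j} \textsc{H}^{b_j}$, $b_j\in\{0,1\}$; a $\textsc{P}$-layer is $\bigotimes_{j} \textsc{P}^{a_j}$, $a_j\in\{0,1,2,3\}$; a $\textsc{C}$-layer is any unitary implemented by a circuit of $\textsc{CNOT}$ gates (equivalently $|x\rangle\mapsto|Ax\rangle$, $A$ invertible over $\mathbb F_2$); a $\textsc{CZ}$-layer is any product of $\textsc{CZ}$ gates on pairs of qubits. Stage notation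 -X-Y-...- lists stages in order of application (leftmost applied first). *)

theory Defs
  imports Complex_Main "Jordan_Normal_Form.Matrix"
begin

text \<open>The computational basis state
  with index x < 2^n has bit string (bit x 0, ..., bit x (n-1)); qubit j carries bit x j.
  A product of layers applied in the order L1, L2, ..., Lk is the matrix Lk * ... * L1.\<close>

definition qdim :: "nat \<Rightarrow> nat" where "qdim n = 2 ^ n"

definition had_entry :: "bool \<Rightarrow> bool \<Rightarrow> complex" where
  "had_entry x y = (if x \<and> y then - 1 else 1) / complex_of_real (sqrt 2)"

definition H_layer :: "nat \<Rightarrow> (nat \<Rightarrow> bool) \<Rightarrow> complex mat" where
  "H_layer n b = mat (qdim n) (qdim n) (\<lambda>(x, y).
      \<Prod>j<n. if b j then had_entry (bit x j) (bit y j)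
              else (if bit x j = bit y j then 1 else 0))"

definition P_layer :: "nat \<Rightarrow> (nat \<Rightarrow> nat) \<Rightarrow> complex mat" where
  "P_layer n a = mat (qdim n) (qdim n) (\<lambda>(x, y).
      if x = y then (\<Prod>j<n. if bit x j then \<i> ^ (a j) else 1) else 0)"

definition cnot_gate :: "nat \<Rightarrow> nat \<Rightarrow> nat \<Rightarrow> complex mat" where
  "cnot_gate n c t = mat (qdim n) (qdim n) (\<lambda>(y, x).
      if (\<forall>j<n. bit y j = (if j = t then (bit x t \<noteq> bit x c) else bit x j)) then 1 else 0)"

definition cz_gate :: "nat \<Rightarrow> nat \<Rightarrow> nat \<Rightarrow> complex mat" where
  "cz_gate n i k = mat (qdim n) (qdim n) (\<lambda>(x, y).
      if x = y then (if bit x i \<and> bit x k then - 1 else 1) else 0)"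

definition circuit :: "nat \<Rightarrow> complex mat list \<Rightarrow> complex mat" where
  "circuit n gs = foldl (\<lambda>acc g. g * acc) (1\<^sub>m (qdim n)) gs"

definition H_layers :: "nat \<Rightarrow> complex mat set" where
  "H_layers n = {H_layer n b | b. True}"

definition P_layers :: "nat \<Rightarrow> complex mat set" where
  "P_layers n = {P_layer n a | a. \<forall>j. a j < 4}"

definition C_layers :: "nat \<Rightarrow> complex mat set" where
  "C_layers n = {circuit n (map (\<lambda>(c, t). cnot_gate n c t) ps) | ps.
                   \<forall>(c, t) \<in> set ps. c < n \<and> t < n \<and> c \<noteq> t}"

definition CZ_layers :: "nat \<Rightarrow> complex mat set" where
  "CZ_layers n = {circuit n (map (\<lambda>(i, k). cz_gate n i k) ps) | ps.
                   \<forall>(i, k) \<in> set ps. i < n \<and> k < n \<and> i \<noteq> k}"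

end

theory Submission imports Defs begin

lemma bit_high: "(x::nat) < 2^n \<Longrightarrow> n \<le> j \<Longrightarrow> \<not> bit x j"
  by (metis bit_take_bit_iff linorder_not_le take_bit_nat_eq_self_iff)

lemma bit_low: "(x::nat) < 2^n \<Longrightarrow> bit x j \<Longrightarrow> j < n"
  using bit_high not_le by blast

lemma bit_ext: "(x::nat) < 2^n \<Longrightarrow> y < 2^n \<Longrightarrow> (\<forall>j<n. bit x j = bit y j) \<Longrightarrow> x = y"
  by (metis bit_eq_iff bit_high linorder_not_le)

definition cn :: "nat \<Rightarrow> nat \<Rightarrow> nat \<Rightarrow> nat" where
  "cn c t x = (if bit x c then flip_bit t x else x)"

lemma bit_cn: "c \<noteq> t \<Longrightarrow> bit (cn c t x) j = (if j = t then (bit x t \<noteq> bit x c) else bit x j)"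
  by (auto simp: cn_def bit_flip_bit_iff)

lemma cn_less: "t < n \<Longrightarrow> (x::nat) < 2^n \<Longrightarrow> cn c t x < 2^n"
proof -
  assume t: "t < n" and x: "x < 2^n"
  have "flip_bit t x = take_bit n (flip_bit t x)"
    by (rule bit_eqI) (use t x bit_high in \<open>auto simp: bit_flip_bit_iff bit_take_bit_iff dest: bit_low\<close>)
  then have "flip_bit t x < 2^n" by (metis take_bit_nat_less_exp)
  then show ?thesis using x by (simp add: cn_def)
qed

lemma cn_cn: "c \<noteq> t \<Longrightarrow> cn c t (cn c t x) = x"
  by (rule bit_eqI) (auto simp: bit_cn)

definition diagm :: "nat \<Rightarrow> (nat \<Rightarrow> complex) \<Rightarrow> complex mat" where
  "diagm n f = mat (qdim n) (qdim n) (\<lambda>(x,y). if x = y then f x else 0)"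

definition permat :: "nat \<Rightarrow> (nat \<Rightarrow> nat) \<Rightarrow> complex mat" where
  "permat n g = mat (qdim n) (qdim n) (\<lambda>(y,x). if y = g x then 1 else 0)"

lemma diagm_carrier[simp]: "diagm n f \<in> carrier_mat (qdim n) (qdim n)"
  by (simp add: diagm_def)
lemma permat_carrier[simp]: "permat n f \<in> carrier_mat (qdim n) (qdim n)"
  by (simp add: permat_def)

lemma dim_diagm[simp]: "dim_row (diagm n f) = qdim n" "dim_col (diagm n f) = qdim n"
  by (auto simp: diagm_def)
lemma dim_permat[simp]: "dim_row (permat n f) = qdim n" "dim_col (permat n f) = qdim n"
  by (auto simp: permat_def)

lemma diag_mult_left: assumes "B \<in> carrier_mat (qdim n) m"
  shows "diagm n f * B = mat (qdim n) m (\<lambda>(x,y). f x * B $$ (x,y))"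
proof (rule eq_matI)
  fix i j assume "i < dim_row (mat (qdim n) m (\<lambda>(x,y). f x * B $$ (x,y)))"
     "j < dim_col (mat (qdim n) m (\<lambda>(x,y). f x * B $$ (x,y)))"
  then have ij: "i < qdim n" "j < m" by auto
  have "(diagm n f * B) $$ (i,j) = (\<Sum>k\<in>{0..<qdim n}. (if i = k then f i else 0) * B $$ (k,j))"
    using ij assms by (simp add: diagm_def scalar_prod_def row_def col_def)
  also have "\<dots> = (\<Sum>k\<in>{0..<qdim n}. if i = k then f i * B $$ (i,j) else 0)"
    by (rule sum.cong) auto
  also have "\<dots> = f i * B $$ (i,j)"
    using ij by simp
  finally show "(diagm n f * B) $$ (i,j) = mat (qdim n) m (\<lambda>(x,y). f x * B $$ (x,y)) $$ (i,j)"
    using ij by simp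
qed (use assms in auto)

lemma diag_mult_right: assumes "A \<in> carrier_mat m (qdim n)"
  shows "A * diagm n f = mat m (qdim n) (\<lambda>(x,y). A $$ (x,y) * f y)"
proof (rule eq_matI)
  fix i j assume "i < dim_row (mat m (qdim n) (\<lambda>(x,y). A $$ (x,y) * f y))"
     "j < dim_col (mat m (qdim n) (\<lambda>(x,y). A $$ (x,y) * f y))"
  then have ij: "i < m" "j < qdim n" by auto
  have "(A * diagm n f) $$ (i,j) = (\<Sum>k\<in>{0..<qdim n}. A $$ (i,k) * (if k = j then f k else 0))"
    using ij assms by (simp add: diagm_def scalar_prod_def row_def col_def)
  also have "\<dots> = (\<Sum>k\<in>{0..<qdim n}. if k = j then A $$ (i,j) * f j else 0)"
    by (rule sum.cong) auto
  also have "\<dots> = A $$ (i,j) * f j"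
    using ij by simp
  finally show "(A * diagm n f) $$ (i,j) = mat m (qdim n) (\<lambda>(x,y). A $$ (x,y) * f y) $$ (i,j)"
    using ij by simp
qed (use assms in auto)

lemma diag_diag: "diagm n f * diagm n g = diagm n (\<lambda>x. f x * g x)"
  by (subst diag_mult_left) (auto simp: diagm_def)

lemma diag_comm: "diagm n f * diagm n g = diagm n g * diagm n f"
  by (simp add: diag_diag mult.commute)

lemma diag_cong: "(\<forall>x<qdim n. f x = g x) \<Longrightarrow> diagm n f = diagm n g"
  by (auto simp: diagm_def)

lemma perm_diag: assumes "\<forall>x<qdim n. g x < qdim n" "\<forall>x<qdim n. f' (g x) = f x"
  shows "permat n g * diagm n f = diagm n f' * permat n g"
proof -
  have 1: "permat n g * diagm n f = mat (qdim n) (qdim n) (\<lambda>(x,y). permat n g $$ (x,y) * f y)"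
    by (rule diag_mult_right) simp
  have 2: "diagm n f' * permat n g = mat (qdim n) (qdim n) (\<lambda>(x,y). f' x * permat n g $$ (x,y))"
    by (rule diag_mult_left) simp
  show ?thesis unfolding 1 2 using assms by (auto simp: permat_def)
qed

lemma diag_perm: assumes "\<forall>x<qdim n. g x < qdim n"
  shows "diagm n f * permat n g = permat n g * diagm n (\<lambda>x. f (g x))"
proof -
  have 1: "permat n g * diagm n (\<lambda>x. f (g x)) = mat (qdim n) (qdim n) (\<lambda>(x,y). permat n g $$ (x,y) * f (g y))"
    by (rule diag_mult_right) simp
  have 2: "diagm n f * permat n g = mat (qdim n) (qdim n) (\<lambda>(x,y). f x * permat n g $$ (x,y))"
    by (rule diag_mult_left) simp
  show ?thesis unfolding 1 2 using assms by (auto simp: permat_def)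
qed


lemma cnot_permat: assumes ct: "c \<noteq> t" "t < n" shows "cnot_gate n c t = permat n (cn c t)"
proof (rule eq_matI)
  fix y x assume "y < dim_row (permat n (cn c t))" "x < dim_col (permat n (cn c t))"
  then have yx: "y < 2^n" "x < 2^n" by (auto simp: qdim_def)
  have "(\<forall>j<n. bit y j = (if j = t then bit x t \<noteq> bit x c else bit x j)) = (y = cn c t x)"
  proof
    assume h: "\<forall>j<n. bit y j = (if j = t then bit x t \<noteq> bit x c else bit x j)"
    show "y = cn c t x" by (rule bit_ext[OF yx(1) cn_less[OF ct(2) yx(2)]]) (use h ct in \<open>simp add: bit_cn\<close>)
  qed (use ct in \<open>simp add: bit_cn\<close>)
  then show "cnot_gate n c t $$ (y, x) = permat n (cn c t) $$ (y, x)"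
    using yx by (simp add: cnot_gate_def permat_def qdim_def)
qed (auto simp: cnot_gate_def permat_def)

lemma circuit_snoc: "circuit n (gs @ [g]) = g * circuit n gs"
  by (simp add: circuit_def)

lemma circuit_carrier: "(\<forall>g\<in>set gs. g \<in> carrier_mat (qdim n) (qdim n)) \<Longrightarrow> circuit n gs \<in> carrier_mat (qdim n) (qdim n)"
proof (induction gs rule: rev_induct)
  case Nil then show ?case by (simp add: circuit_def)
next
  case (snoc x xs) then show ?case by (auto simp: circuit_snoc intro!: mult_carrier_mat)
qed

lemma circuit_append: "(\<forall>g\<in>set xs. g \<in> carrier_mat (qdim n) (qdim n)) \<Longrightarrow> (\<forall>g\<in>set ys. g \<in> carrier_mat (qdim n) (qdim n))
  \<Longrightarrow> circuit n (xs @ ys) = circuit n ys * circuit n xs"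
proof (induction ys rule: rev_induct)
  case Nil then show ?case using circuit_carrier[of xs n] by (simp add: circuit_def)
next
  case (snoc y ys)
  have "circuit n (xs @ ys @ [y]) = y * circuit n (xs @ ys)" using circuit_snoc[of n "xs@ys" y] by simp
  also have "\<dots> = y * (circuit n ys * circuit n xs)" using snoc by simp
  also have "\<dots> = (y * circuit n ys) * circuit n xs"
    using snoc circuit_carrier[of xs n] circuit_carrier[of ys n] by (simp add: assoc_mult_mat[symmetric, of y "qdim n" "qdim n"])
  finally show ?case by (simp add: circuit_snoc)
qed

lemma one_diagm: "1\<^sub>m (qdim n) = diagm n (\<lambda>_. 1)"
  by (auto simp: diagm_def)

definition czf :: "nat \<Rightarrow> nat \<Rightarrow> nat \<Rightarrow> complex" where
  "czf i k x = (if bit x i \<and> bit x k then - 1 else 1)"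
definition czl :: "(nat \<times> nat) list \<Rightarrow> nat \<Rightarrow> complex" where
  "czl ps x = prod_list (map (\<lambda>(i,k). czf i k x) ps)"
definition pl :: "nat \<Rightarrow> (nat \<Rightarrow> nat) \<Rightarrow> nat \<Rightarrow> complex" where
  "pl n a x = (\<Prod>j<n. if bit x j then \<i> ^ (a j) else 1)"

lemma cz_diagm: "cz_gate n i k = diagm n (czf i k)"
  unfolding cz_gate_def diagm_def czf_def by (rule refl)
lemma P_diagm: "P_layer n a = diagm n (pl n a)"
  unfolding P_layer_def diagm_def pl_def by (rule refl)

lemma cz_circuit: "circuit n (map (\<lambda>(i, k). cz_gate n i k) ps) = diagm n (czl ps)"
proof (induction ps rule: rev_induct)
  case Nil then show ?case by (simp add: circuit_def one_diagm czl_def)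
next
  case (snoc p ps)
  then show ?case by (simp add: circuit_snoc case_prod_beta cz_diagm diag_diag czl_def mult.commute)
qed


definition GD :: "nat \<Rightarrow> (nat \<Rightarrow> complex) \<Rightarrow> bool" where
  "GD n f = (\<exists>a ps. (\<forall>j. a j < 4) \<and> (\<forall>(i,k)\<in>set ps. i<n \<and> k<n \<and> i\<noteq>k) \<and>
                     (\<forall>x<qdim n. f x = pl n a x * czl ps x))"

lemma GD_cong: "GD n f \<Longrightarrow> (\<And>x. x < qdim n \<Longrightarrow> f x = g x) \<Longrightarrow> GD n g"
proof -
  assume "GD n f" and h: "\<And>x. x < qdim n \<Longrightarrow> f x = g x"
  then obtain a ps where "(\<forall>j. a j < 4)" "(\<forall>(i,k)\<in>set ps. i<n \<and> k<n \<and> i\<noteq>k)"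
                     "(\<forall>x<qdim n. f x = pl n a x * czl ps x)" unfolding GD_def by blast
  then show ?thesis unfolding GD_def using h by (intro exI[of _ a] exI[of _ ps]) auto
qed

lemma pl_zero: "pl n (\<lambda>_. 0) x = 1"
  unfolding pl_def by (rule prod.neutral) auto

lemma GD_one: "GD n (\<lambda>x. 1)"
  unfolding GD_def by (rule exI[of _ "\<lambda>_. 0"], rule exI[of _ "[]"]) (simp add: pl_zero czl_def)

lemma i_pow_mod: "\<i> ^ m = \<i> ^ (m mod 4)"
proof -
  have e: "m = 4*(m div 4) + m mod 4" by simp
  have i4: "(\<i>::complex)^4 = 1" by (simp add: numeral_eq_Suc)
  have "\<i> ^ m = (\<i>^4)^(m div 4) * \<i> ^ (m mod 4)" by (metis e power_add power_mult)
  then show ?thesis by (simp only: i4 power_one mult_1)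
qed

lemma GD_mult: assumes "GD n f" "GD n g" shows "GD n (\<lambda>x. f x * g x)"
proof -
  obtain a ps where A: "\<forall>j. a j < 4" "\<forall>(i,k)\<in>set ps. i<n \<and> k<n \<and> i\<noteq>k" "\<forall>x<qdim n. f x = pl n a x * czl ps x"
    using assms(1) unfolding GD_def by blast
  obtain b qs where B: "\<forall>j. b j < 4" "\<forall>(i,k)\<in>set qs. i<n \<and> k<n \<and> i\<noteq>k" "\<forall>x<qdim n. g x = pl n b x * czl qs x"
    using assms(2) unfolding GD_def by blast
  have pl: "pl n a x * pl n b x = pl n (\<lambda>j. (a j + b j) mod 4) x" for x
    unfolding pl_def prod.distrib[symmetric]
    by (rule prod.cong) (auto simp: power_add[symmetric] i_pow_mod[of "a _ + b _"])
  have cz: "czl (ps @ qs) x = czl ps x * czl qs x" for x by (simp add: czl_def)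
  show ?thesis unfolding GD_def
    apply (rule exI[of _ "\<lambda>j. (a j + b j) mod 4"], rule exI[of _ "ps @ qs"])
  proof (intro conjI allI impI)
    show "\<forall>(i, k)\<in>set (ps @ qs). i < n \<and> k < n \<and> i \<noteq> k" using A(2) B(2) by auto
    fix x assume "x < qdim n"
    then have "f x * g x = (pl n a x * pl n b x) * (czl ps x * czl qs x)"
      using A(3) B(3) by (simp add: mult_ac)
    then show "f x * g x = pl n (\<lambda>j. (a j + b j) mod 4) x * czl (ps @ qs) x"
      by (simp only: pl cz)
  qed simp
qed

lemma GD_power: "GD n f \<Longrightarrow> GD n (\<lambda>x. f x ^ m)"
  by (induction m) (auto simp: GD_one intro: GD_mult)

lemma GD_prod: "finite S \<Longrightarrow> (\<forall>j\<in>S. GD n (F j)) \<Longrightarrow> GD n (\<lambda>x. \<Prod>j\<in>S. F j x)"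
  by (induction S rule: finite_induct) (auto simp: GD_one intro: GD_mult)

lemma GD_prodlist: "(\<forall>p\<in>set ps. GD n (F p)) \<Longrightarrow> GD n (\<lambda>x. prod_list (map (\<lambda>p. F p x) ps))"
  by (induction ps) (auto simp: GD_one intro: GD_mult)

lemma GD_sgl: assumes "j < n" shows "GD n (\<lambda>x. if bit x j then \<i> else 1)"
proof -
  have "pl n (\<lambda>l. if l = j then 1 else 0) x = (if bit x j then \<i> else 1)" for x
  proof -
    have "pl n (\<lambda>l. if l = j then 1 else 0) x = (\<Prod>l\<in>{..<n}. if l = j then (if bit x j then \<i> else 1) else 1)"
      unfolding pl_def by (rule prod.cong) auto
    also have "\<dots> = (if bit x j then \<i> else 1)" using assms by simp
    finally show ?thesis .
  qed
  then show ?thesis unfolding GD_def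
    by (intro exI[of _ "\<lambda>l. if l = j then 1 else 0"] exI[of _ "[]"]) (simp add: czl_def)
qed

lemma GD_m1: assumes "j < n" shows "GD n (\<lambda>x. if bit x j then -1 else 1)"
  by (rule GD_cong[OF GD_mult[OF GD_sgl[OF assms] GD_sgl[OF assms]]]) auto

lemma GD_cz: assumes "i < n" "k < n" "i \<noteq> k" shows "GD n (czf i k)"
  unfolding GD_def
  by (intro exI[of _ "\<lambda>l. 0"] exI[of _ "[(i,k)]"]) (use assms in \<open>simp add: czl_def pl_zero\<close>)

lemma GD_cn_sgl: assumes "c < n" "t < n" "c \<noteq> t" "j < n"
  shows "GD n (\<lambda>x. if bit (cn c t x) j then \<i> else 1)"
proof (cases "j = t")
  case True
  have "GD n (\<lambda>x. (if bit x t then \<i> else 1) * (if bit x c then \<i> else 1) * czf t c x)"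
    using assms by (intro GD_mult GD_sgl GD_cz) auto
  then show ?thesis
    by (rule GD_cong) (use assms True in \<open>auto simp: bit_cn czf_def\<close>)
next
  case False
  then show ?thesis using GD_sgl[OF assms(4)] by (rule_tac GD_cong) (auto simp: bit_cn assms)
qed

lemma GD_cn_cz: assumes "c < n" "t < n" "c \<noteq> t" "i < n" "k < n" "i \<noteq> k"
  shows "GD n (\<lambda>x. czf i k (cn c t x))"
proof -
  consider "i \<noteq> t" "k \<noteq> t" | "i = t" "k \<noteq> c" | "i = t" "k = c" | "k = t" "i \<noteq> c" | "k = t" "i = c"
    by blast
  then show ?thesis
  proof cases
    case 1 then show ?thesis
      by (rule_tac GD_cong[OF GD_cz[OF assms(4-6)]]) (use 1 assms in \<open>auto simp: bit_cn czf_def\<close>)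
  next
    case 2
    have "GD n (\<lambda>x. czf t k x * czf c k x)" using assms 2 by (intro GD_mult GD_cz) auto
    then show ?thesis by (rule GD_cong) (use assms 2 in \<open>auto simp: bit_cn czf_def\<close>)
  next
    case 3
    have "GD n (\<lambda>x. (if bit x c then -1 else 1) * czf t c x)" using assms 3 by (intro GD_mult GD_cz GD_m1) auto
    then show ?thesis by (rule GD_cong) (use assms 3 in \<open>auto simp: bit_cn czf_def\<close>)
  next
    case 4
    have "GD n (\<lambda>x. czf i t x * czf i c x)" using assms 4 by (intro GD_mult GD_cz) auto
    then show ?thesis by (rule GD_cong) (use assms 4 in \<open>auto simp: bit_cn czf_def\<close>)
  next
    case 5
    have "GD n (\<lambda>x. (if bit x c then -1 else 1) * czf c t x)" using assms 5 by (intro GD_mult GD_cz GD_m1) auto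
    then show ?thesis by (rule GD_cong) (use assms 5 in \<open>auto simp: bit_cn czf_def\<close>)
  qed
qed

lemma GD_cn: assumes "c < n" "t < n" "c \<noteq> t" "GD n f" shows "GD n (\<lambda>x. f (cn c t x))"
proof -
  obtain a ps where A: "\<forall>j. a j < 4" "\<forall>(i,k)\<in>set ps. i<n \<and> k<n \<and> i\<noteq>k" "\<forall>x<qdim n. f x = pl n a x * czl ps x"
    using assms(4) unfolding GD_def by blast
  have "GD n (\<lambda>x. (\<Prod>j\<in>{..<n}. (if bit (cn c t x) j then \<i> else 1) ^ a j) *
                  prod_list (map (\<lambda>p. czf (fst p) (snd p) (cn c t x)) ps))"
    apply (intro GD_mult GD_prod GD_prodlist ballI GD_power)
    using A(2) by (auto intro!: GD_cn_sgl GD_cn_cz assms)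
  then show ?thesis
  proof (rule GD_cong)
    fix x assume "x < qdim n"
    then have "cn c t x < qdim n" using cn_less[OF assms(2)] by (simp add: qdim_def)
    then show "(\<Prod>j\<in>{..<n}. (if bit (cn c t x) j then \<i> else 1) ^ a j) *
                  prod_list (map (\<lambda>p. czf (fst p) (snd p) (cn c t x)) ps) = f (cn c t x)"
    proof -
      have 1: "(\<Prod>j\<in>{..<n}. (if bit (cn c t x) j then \<i> else 1) ^ a j) = pl n a (cn c t x)"
        unfolding pl_def by (rule prod.cong) auto
      have 2: "prod_list (map (\<lambda>p. czf (fst p) (snd p) (cn c t x)) ps) = czl ps (cn c t x)"
        unfolding czl_def by (rule arg_cong[where f=prod_list], rule map_cong) auto
      show ?thesis unfolding 1 2 using A(3) \<open>cn c t x < qdim n\<close> by simp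
    qed
  qed
qed


lemma H_carrier: "H \<in> H_layers n \<Longrightarrow> H \<in> carrier_mat (qdim n) (qdim n)"
  by (auto simp: H_layers_def H_layer_def)

lemma cnot_carrier: "cnot_gate n c t \<in> carrier_mat (qdim n) (qdim n)"
  by (simp add: cnot_gate_def)

lemma C_carrier: "C \<in> C_layers n \<Longrightarrow> C \<in> carrier_mat (qdim n) (qdim n)"
  by (auto simp: C_layers_def intro!: circuit_carrier simp: cnot_carrier)

lemma C_mult: "C \<in> C_layers n \<Longrightarrow> C' \<in> C_layers n \<Longrightarrow> C' * C \<in> C_layers n"
proof -
  assume "C \<in> C_layers n" "C' \<in> C_layers n"
  then obtain ps qs where ps: "C = circuit n (map (\<lambda>(c, t). cnot_gate n c t) ps)" "\<forall>(c, t) \<in> set ps. c < n \<and> t < n \<and> c \<noteq> t"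
    and qs: "C' = circuit n (map (\<lambda>(c, t). cnot_gate n c t) qs)" "\<forall>(c, t) \<in> set qs. c < n \<and> t < n \<and> c \<noteq> t"
    unfolding C_layers_def by blast
  have "C' * C = circuit n (map (\<lambda>(c, t). cnot_gate n c t) (ps @ qs))"
    unfolding ps qs map_append by (rule circuit_append[symmetric]) (auto simp: cnot_carrier)
  moreover have "\<forall>(c, t) \<in> set (ps @ qs). c < n \<and> t < n \<and> c \<noteq> t" using ps(2) qs(2) by auto
  ultimately show ?thesis unfolding C_layers_def by blast
qed

lemma P_GD: "P \<in> P_layers n \<Longrightarrow> \<exists>f. GD n f \<and> P = diagm n f"
proof -
  assume "P \<in> P_layers n"
  then obtain a where a: "P = P_layer n a" "\<forall>j. a j < 4" unfolding P_layers_def by blast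
  have "GD n (pl n a)" unfolding GD_def
    by (intro exI[of _ a] exI[of _ "[]"]) (simp add: a czl_def)
  then show ?thesis using a P_diagm by blast
qed

lemma GD_decomp: assumes "GD n f"
  shows "\<exists>P Z. P \<in> P_layers n \<and> Z \<in> CZ_layers n \<and> diagm n f = P * Z \<and> diagm n f = Z * P"
proof -
  obtain a ps where A: "\<forall>j. a j < 4" "\<forall>(i,k)\<in>set ps. i<n \<and> k<n \<and> i\<noteq>k" "\<forall>x<qdim n. f x = pl n a x * czl ps x"
    using assms unfolding GD_def by blast
  let ?P = "P_layer n a" and ?Z = "circuit n (map (\<lambda>(i, k). cz_gate n i k) ps)"
  have P: "?P \<in> P_layers n" using A(1) unfolding P_layers_def by blast
  have Z: "?Z \<in> CZ_layers n" using A(2) unfolding CZ_layers_def by blast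
  have e: "diagm n f = ?P * ?Z"
    unfolding P_diagm cz_circuit diag_diag using A(3) by (intro diag_cong) auto
  have "diagm n f = ?Z * ?P" unfolding e P_diagm cz_circuit by (rule diag_comm)
  with e P Z show ?thesis by blast
qed

lemma gate_L1: assumes "c < n" "t < n" "c \<noteq> t"
  shows "cnot_gate n c t * diagm n f = diagm n (\<lambda>x. f (cn c t x)) * cnot_gate n c t"
  unfolding cnot_permat[OF assms(3,2)]
  by (rule perm_diag) (use assms cn_less cn_cn in \<open>auto simp: qdim_def\<close>)

lemma gate_L2: assumes "c < n" "t < n" "c \<noteq> t"
  shows "diagm n f * cnot_gate n c t = cnot_gate n c t * diagm n (\<lambda>x. f (cn c t x))"
  unfolding cnot_permat[OF assms(3,2)]
  by (rule diag_perm) (use assms cn_less in \<open>auto simp: qdim_def\<close>)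

lemma C_L1: assumes "C \<in> C_layers n" "GD n f"
  shows "\<exists>f'. GD n f' \<and> C * diagm n f = diagm n f' * C"
proof -
  obtain ps where ps: "C = circuit n (map (\<lambda>(c, t). cnot_gate n c t) ps)" "\<forall>(c, t) \<in> set ps. c < n \<and> t < n \<and> c \<noteq> t"
    using assms(1) unfolding C_layers_def by blast
  have "\<forall>f. GD n f \<longrightarrow> (\<exists>f'. GD n f' \<and> circuit n (map (\<lambda>(c, t). cnot_gate n c t) ps) * diagm n f
          = diagm n f' * circuit n (map (\<lambda>(c, t). cnot_gate n c t) ps))"
    using ps(2)
  proof (induction ps rule: rev_induct)
    case Nil then show ?case by (auto simp: circuit_def)
  next
    case (snoc p ps)
    obtain c t where p: "p = (c,t)" by (cases p)
    have ct: "c < n" "t < n" "c \<noteq> t" using snoc.prems p by auto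
    let ?Cp = "circuit n (map (\<lambda>(c, t). cnot_gate n c t) ps)"
    have Cc: "?Cp \<in> carrier_mat (qdim n) (qdim n)" by (auto intro!: circuit_carrier simp: cnot_carrier)
    have IH: "\<forall>f. GD n f \<longrightarrow> (\<exists>f'. GD n f' \<and> ?Cp * diagm n f = diagm n f' * ?Cp)"
      by (rule snoc.IH) (use snoc.prems in auto)
    have cs: "circuit n (map (\<lambda>(c, t). cnot_gate n c t) (ps @ [p])) = cnot_gate n c t * ?Cp"
      by (simp add: circuit_snoc p)
    show ?case unfolding cs
    proof (intro allI impI)
      fix f assume f: "GD n f"
      obtain f' where f': "GD n f'" "?Cp * diagm n f = diagm n f' * ?Cp" using IH f by blast
      let ?G = "cnot_gate n c t"
      have "(?G * ?Cp) * diagm n f = ?G * (?Cp * diagm n f)"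
        by (rule assoc_mult_mat[OF cnot_carrier Cc diagm_carrier])
      also have "\<dots> = ?G * (diagm n f' * ?Cp)" using f' by simp
      also have "\<dots> = (?G * diagm n f') * ?Cp" by (rule assoc_mult_mat[OF cnot_carrier diagm_carrier Cc, symmetric])
      also have "\<dots> = (diagm n (\<lambda>x. f' (cn c t x)) * ?G) * ?Cp" using gate_L1[OF ct] by simp
      also have "\<dots> = diagm n (\<lambda>x. f' (cn c t x)) * (?G * ?Cp)" by (rule assoc_mult_mat[OF diagm_carrier cnot_carrier Cc])
      finally show "\<exists>f''. GD n f'' \<and> (?G * ?Cp) * diagm n f = diagm n f'' * (?G * ?Cp)"
        using GD_cn[OF ct f'(1)] by blast
    qed
  qed
  then show ?thesis using assms(2) ps(1) by blast
qed

lemma C_L2: assumes "C \<in> C_layers n" "GD n f"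
  shows "\<exists>f'. GD n f' \<and> diagm n f * C = C * diagm n f'"
proof -
  obtain ps where ps: "C = circuit n (map (\<lambda>(c, t). cnot_gate n c t) ps)" "\<forall>(c, t) \<in> set ps. c < n \<and> t < n \<and> c \<noteq> t"
    using assms(1) unfolding C_layers_def by blast
  have "\<forall>f. GD n f \<longrightarrow> (\<exists>f'. GD n f' \<and> diagm n f * circuit n (map (\<lambda>(c, t). cnot_gate n c t) ps)
          = circuit n (map (\<lambda>(c, t). cnot_gate n c t) ps) * diagm n f')"
    using ps(2)
  proof (induction ps rule: rev_induct)
    case Nil then show ?case by (auto simp: circuit_def)
  next
    case (snoc p ps)
    obtain c t where p: "p = (c,t)" by (cases p)
    have ct: "c < n" "t < n" "c \<noteq> t" using snoc.prems p by auto
    let ?Cp = "circuit n (map (\<lambda>(c, t). cnot_gate n c t) ps)"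
    have Cc: "?Cp \<in> carrier_mat (qdim n) (qdim n)" by (auto intro!: circuit_carrier simp: cnot_carrier)
    have IH: "\<forall>f. GD n f \<longrightarrow> (\<exists>f'. GD n f' \<and> diagm n f * ?Cp = ?Cp * diagm n f')"
      by (rule snoc.IH) (use snoc.prems in auto)
    have cs: "circuit n (map (\<lambda>(c, t). cnot_gate n c t) (ps @ [p])) = cnot_gate n c t * ?Cp"
      by (simp add: circuit_snoc p)
    show ?case unfolding cs
    proof (intro allI impI)
      fix f assume f: "GD n f"
      let ?G = "cnot_gate n c t"
      have g: "GD n (\<lambda>x. f (cn c t x))" using GD_cn[OF ct f] .
      obtain f' where f': "GD n f'" "diagm n (\<lambda>x. f (cn c t x)) * ?Cp = ?Cp * diagm n f'" using IH g by blast
      have "diagm n f * (?G * ?Cp) = (diagm n f * ?G) * ?Cp"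
        by (rule assoc_mult_mat[OF diagm_carrier cnot_carrier Cc, symmetric])
      also have "\<dots> = (?G * diagm n (\<lambda>x. f (cn c t x))) * ?Cp" using gate_L2[OF ct] by simp
      also have "\<dots> = ?G * (diagm n (\<lambda>x. f (cn c t x)) * ?Cp)" by (rule assoc_mult_mat[OF cnot_carrier diagm_carrier Cc])
      also have "\<dots> = ?G * (?Cp * diagm n f')" using f' by simp
      also have "\<dots> = (?G * ?Cp) * diagm n f'" by (rule assoc_mult_mat[OF cnot_carrier Cc diagm_carrier, symmetric])
      finally show "\<exists>f''. GD n f'' \<and> diagm n f * (?G * ?Cp) = (?G * ?Cp) * diagm n f''"
        using f'(1) by blast
    qed
  qed
  then show ?thesis using assms(2) ps(1) by blast
qed


lemma aeq: assumes "A * B = C * D" "A \<in> carrier_mat N N" "B \<in> carrier_mat N N" "C \<in> carrier_mat N N"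
  "D \<in> carrier_mat N N" "X \<in> carrier_mat N m"
  shows "A * (B * X) = C * (D * X)"
proof -
  have "A * (B * X) = (A * B) * X" by (rule assoc_mult_mat[OF assms(2,3,6), symmetric])
  also have "\<dots> = (C * D) * X" using assms(1) by simp
  also have "\<dots> = C * (D * X)" by (rule assoc_mult_mat[OF assms(4,5,6)])
  finally show ?thesis .
qed

lemma P_carrier: "P \<in> P_layers n \<Longrightarrow> P \<in> carrier_mat (qdim n) (qdim n)"
  by (auto simp: P_layers_def P_diagm)

lemma Z_carrier: "Z \<in> CZ_layers n \<Longrightarrow> Z \<in> carrier_mat (qdim n) (qdim n)"
  by (auto simp: CZ_layers_def cz_circuit)

theorem mainTheorem3:
  fixes n :: nat
  assumes "n \<ge> 1"
    and "H1 \<in> H_layers n" and "C1 \<in> C_layers n" and "P1 \<in> P_layers n"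
    and "C2 \<in> C_layers n" and "P2 \<in> P_layers n" and "C3 \<in> C_layers n"
    and "H2 \<in> H_layers n" and "P3 \<in> P_layers n" and "C4 \<in> C_layers n"
    and "P4 \<in> P_layers n" and "C5 \<in> C_layers n"
  shows "\<exists>H1' C1' Z1' P1' H2' P2' Z2' C2'.
           H1' \<in> H_layers n \<and> C1' \<in> C_layers n \<and> Z1' \<in> CZ_layers n \<and>
           P1' \<in> P_layers n \<and> H2' \<in> H_layers n \<and> P2' \<in> P_layers n \<and>
           Z2' \<in> CZ_layers n \<and> C2' \<in> C_layers n \<and>
           C5 * P4 * C4 * P3 * H2 * C3 * P2 * C2 * P1 * C1 * H1
             = C2' * Z2' * P2' * H2' * P1' * Z1' * C1' * H1'"
proof -
  note cars = H_carrier[OF assms(2)] C_carrier[OF assms(3)] P_carrier[OF assms(4)]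
    C_carrier[OF assms(5)] P_carrier[OF assms(6)] C_carrier[OF assms(7)] H_carrier[OF assms(8)]
    P_carrier[OF assms(9)] C_carrier[OF assms(10)] P_carrier[OF assms(11)] C_carrier[OF assms(12)]
  obtain f1 where f1: "GD n f1" "P1 = diagm n f1" using P_GD[OF assms(4)] by blast
  obtain f2 where f2: "GD n f2" "P2 = diagm n f2" using P_GD[OF assms(6)] by blast
  obtain f3 where f3: "GD n f3" "P3 = diagm n f3" using P_GD[OF assms(9)] by blast
  obtain f4 where f4: "GD n f4" "P4 = diagm n f4" using P_GD[OF assms(11)] by blast
  obtain g1 where g1: "GD n g1" "C2 * P1 = diagm n g1 * C2" using C_L1[OF assms(5) f1(1)] f1(2) by blast
  have g12: "GD n (\<lambda>x. f2 x * g1 x)" "P2 * diagm n g1 = diagm n (\<lambda>x. f2 x * g1 x)"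
    using GD_mult[OF f2(1) g1(1)] f2(2) diag_diag by auto
  obtain g2 where g2: "GD n g2" "C3 * diagm n (\<lambda>x. f2 x * g1 x) = diagm n g2 * C3" using C_L1[OF assms(7) g12(1)] by blast
  obtain g3 where g3: "GD n g3" "P4 * C4 = C4 * diagm n g3" using C_L2[OF assms(10) f4(1)] f4(2) by blast
  have g33: "GD n (\<lambda>x. g3 x * f3 x)" "diagm n g3 * P3 = diagm n (\<lambda>x. g3 x * f3 x)"
    using GD_mult[OF g3(1) f3(1)] f3(2) diag_diag by auto
  obtain Pa Za where a: "Pa \<in> P_layers n" "Za \<in> CZ_layers n" "diagm n g2 = Pa * Za"
    using GD_decomp[OF g2(1)] by blast
  obtain Pb Zb where b: "Pb \<in> P_layers n" "Zb \<in> CZ_layers n" "diagm n (\<lambda>x. g3 x * f3 x) = Zb * Pb"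
    using GD_decomp[OF g33(1)] by blast
  note cars2 = P_carrier[OF a(1)] Z_carrier[OF a(2)] P_carrier[OF b(1)] Z_carrier[OF b(2)]
  let ?N = "qdim n"
  have mc: "\<And>A B. A \<in> carrier_mat ?N ?N \<Longrightarrow> B \<in> carrier_mat ?N ?N \<Longrightarrow> A * B \<in> carrier_mat ?N ?N"
    by (rule mult_carrier_mat)
  have asc: "\<And>A B C. A \<in> carrier_mat ?N ?N \<Longrightarrow> B \<in> carrier_mat ?N ?N \<Longrightarrow> C \<in> carrier_mat ?N ?N \<Longrightarrow> A * B * C = A * (B * C)"
    by (rule assoc_mult_mat)
  have s1: "\<And>X. X \<in> carrier_mat ?N ?N \<Longrightarrow> C2 * (P1 * X) = diagm n g1 * (C2 * X)"
    by (rule aeq[OF g1(2)]) (use cars in auto)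
  have s2: "\<And>X. X \<in> carrier_mat ?N ?N \<Longrightarrow> P2 * (diagm n g1 * X) = diagm n (\<lambda>x. f2 x * g1 x) * X"
    using assoc_mult_mat[OF cars(5) diagm_carrier, symmetric] g12(2) by metis
  have s3: "\<And>X. X \<in> carrier_mat ?N ?N \<Longrightarrow> C3 * (diagm n (\<lambda>x. f2 x * g1 x) * X) = diagm n g2 * (C3 * X)"
    by (rule aeq[OF g2(2)]) (use cars in auto)
  have s4: "\<And>X. X \<in> carrier_mat ?N ?N \<Longrightarrow> P4 * (C4 * X) = C4 * (diagm n g3 * X)"
    by (rule aeq[OF g3(2)]) (use cars in auto)
  have s5: "\<And>X. X \<in> carrier_mat ?N ?N \<Longrightarrow> diagm n g3 * (P3 * X) = diagm n (\<lambda>x. g3 x * f3 x) * X"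
    using assoc_mult_mat[OF diagm_carrier cars(8), symmetric] g33(2) by metis
  have s6: "\<And>X. X \<in> carrier_mat ?N ?N \<Longrightarrow> Zb * (Pb * X) = diagm n (\<lambda>x. g3 x * f3 x) * X"
    using assoc_mult_mat[OF cars2(4) cars2(3), symmetric] b(3) by metis
  have s7: "\<And>X. X \<in> carrier_mat ?N ?N \<Longrightarrow> Pa * (Za * X) = diagm n g2 * X"
    using assoc_mult_mat[OF cars2(1) cars2(2), symmetric] a(3) by metis
  have "C5 * P4 * C4 * P3 * H2 * C3 * P2 * C2 * P1 * C1 * H1
      = (C5 * C4) * Zb * Pb * H2 * Pa * Za * (C3 * C2 * C1) * H1"
    using cars cars2 by (simp add: mc asc s1 s2 s3 s4 s5 s6 s7 del: assoc_mult_mat)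
  moreover have "C5 * C4 \<in> C_layers n" by (rule C_mult[OF assms(10,12)])
  moreover have "C3 * C2 * C1 \<in> C_layers n" by (intro C_mult assms)
  ultimately show ?thesis using assms(2,8) a b by blast
qed

end
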